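(* Let $n\ge2$ and let $x\in\mathbb{C}^{n\times n}$ be generic (as defined in the context). For each $1\le k\le n$ fix an ordering $\mu^{(k)}_1,\ldots,\mu^{(k)}_k$ of the eigenvalues of $x_k$ (note $x^T$ has the same leading principal eigenvalues, so $x^T$ is also generic and the same orderings are used for it). Let $b_m$ ($1\le m\le n-1$) be the dual coordinates of $x$ and $\tilde b_m$ those of $x^{T}$, defined with respect to these orderings. Then for $1\le m\le n-1$, \[ \operatorname{diag}(\tilde b_m)=\Pi_m\operatorname{diag}(b_m)^{-1}\Sigma_m, \] where $\Sigma_m=-P_{m+1}(\Lambda_m)\bigl(P_m'(\Lambda_m)\bigr)^{-1}$ and $\Pi_m$ is the $m\times m$ diagonal matrix defined in the context.
   Context: For a square matrix $x$, $x_k$ is its leading principal $k\times k$ submatrix, $E(x_k)$ its eigenvalue multiset, and $P_k(\lambda)=\det(\lambda I_k-x_k)$. A matrix $x\in\mathbb{C}^{n\times n}$ is generic if for every $1\le k\le n$ the eigenvalues of $x_k$ are distinct and for every $1\le k\le n-1$, $E(x_k)\cap E(x_{k+1})=\varnothing$. Let $\Lambda_k=\operatorname{diag}(\mu^{(k)}_1,\ldots,\mu^{(k)}_k)$. For generic $x$ and $1\le m\le n-1$, let $g_m\in\mathrm{GL}(m)$ be the unique matrix with $x_m=g_m\Lambda_mg_m^{-1}$ whose last row consists of ones; the dual coordinates $b_m\in\mathbb{C}^m$ (and $c_m\in\mathbb{C}^m$, $\delta_{m+1}\in\mathbb{C}$) of $x$ are defined by $\begin{pmatrix} g_m^{-1}&0\\0&1\end{pmatrix}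 x_{m+1}\begin{pmatrix} g_m&0\\0&1\end{pmatrix}=\begin{pmatrix}\Lambda_m & c_m\\ b_m^{T} & \delta_{m+1}\end{pmatrix}$. $\operatorname{diag}(v)$ is the diagonal matrix with diagonal $v$; $P(\Lambda_m)$ is the diagonal matrix with entries $P(\mu^{(m)}_i)$. $\Pi_m$ is the $m\times m$ diagonal matrix with entries \[ (\Pi_m)_{jj}=1-\sum_{i=1}^{m-1}\frac{\prod_{k=1}^{m}(\mu^{(m-1)}_i-\mu^{(m)}_k)}{(\mu^{(m)}_j-\mu^{(m-1)}_i)^2\prod_{k\ne i,\,1\le k\le m-1}(\mu^{(m-1)}_i-\mu^{(m-1)}_k)},\qquad 1\le j\le m \] (so $\Pi_1=(1)$); it is the diagonal matrix relating row and column eigenvectors of the arrow matrix $\begin{pmatrix}\Lambda_{m-1}&c_{m-1}\\ b_{m-1}^T&\delta_m\end{pmatrix}$, equivalently the diagonal matrix for which the last row of $(g_m^{-1})^{T}\Pi_m$ consists of ones. *)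

theory Defs
  imports "Jordan_Normal_Form.Matrix" "Jordan_Normal_Form.Char_Poly"
begin

(* Conventions: matrices are Jordan_Normal_Form matrices ('a mat) with 0-based
   indices.  The paper's eigenvalue mu^{(k)}_i (1 <= i <= k) is  mu k (i-1). *)

definition mat_inv :: "complex mat \<Rightarrow> complex mat" where
  "mat_inv A = (THE B. B \<in> carrier_mat (dim_row A) (dim_row A)
                      \<and> inverts_mat A B \<and> inverts_mat B A)"

definition lead :: "complex mat \<Rightarrow> nat \<Rightarrow> complex mat" where
  "lead x k = mat k k (\<lambda>(i,j). x $$ (i,j))"

definition Pk :: "complex mat \<Rightarrow> nat \<Rightarrow> complex poly" where
  "Pk x k = char_poly (lead x k)"

definition eigs :: "complex mat \<Rightarrow> nat \<Rightarrow> complex set" where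
  "eigs x k = {l. eigenvalue (lead x k) l}"

definition generic :: "nat \<Rightarrow> complex mat \<Rightarrow> bool" where
  "generic n x \<longleftrightarrow> x \<in> carrier_mat n n
     \<and> (\<forall>k\<in>{1..n}. card (eigs x k) = k)
     \<and> (\<forall>k\<in>{1..n-1}. eigs x k \<inter> eigs x (Suc k) = {})"

definition eig_ordering :: "nat \<Rightarrow> complex mat \<Rightarrow> (nat \<Rightarrow> nat \<Rightarrow> complex) \<Rightarrow> bool" where
  "eig_ordering n x mu \<longleftrightarrow> (\<forall>k\<in>{1..n}. bij_betw (mu k) {..<k} (eigs x k))"

definition Lam :: "(nat \<Rightarrow> nat \<Rightarrow> complex) \<Rightarrow> nat \<Rightarrow> complex mat" where
  "Lam mu k = mat_diag k (mu k)"

definition dual_g :: "complex mat \<Rightarrow> (nat \<Rightarrow> nat \<Rightarrow> complex) \<Rightarrow> nat \<Rightarrow> complex mat" where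
  "dual_g x mu m = (THE g. g \<in> carrier_mat m m \<and> invertible_mat g
      \<and> lead x m = g * Lam mu m * mat_inv g
      \<and> (\<forall>j<m. g $$ (m - 1, j) = 1))"

text \<open>The conjugated matrix diag(g_m^{-1},1) x_{m+1} diag(g_m,1)
  = [[Lambda_m, c_m], [b_m^T, delta_{m+1}]].\<close>
definition dual_block :: "complex mat \<Rightarrow> (nat \<Rightarrow> nat \<Rightarrow> complex) \<Rightarrow> nat \<Rightarrow> complex mat" where
  "dual_block x mu m =
     (let g = dual_g x mu m in
      four_block_mat (mat_inv g) (0\<^sub>m m 1) (0\<^sub>m 1 m) (1\<^sub>m 1)
        * lead x (Suc m)
        * four_block_mat g (0\<^sub>m m 1) (0\<^sub>m 1 m) (1\<^sub>m 1))"

text \<open>Dual coordinates b_m (entry j is the paper's (b_m)_{j+1}).\<close>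
definition dual_b :: "complex mat \<Rightarrow> (nat \<Rightarrow> nat \<Rightarrow> complex) \<Rightarrow> nat \<Rightarrow> nat \<Rightarrow> complex" where
  "dual_b x mu m j = dual_block x mu m $$ (m, j)"

definition Pi_mat :: "(nat \<Rightarrow> nat \<Rightarrow> complex) \<Rightarrow> nat \<Rightarrow> complex mat" where
  "Pi_mat mu m = mat_diag m (\<lambda>j. 1 - (\<Sum>i<m-1.
      (\<Prod>k<m. mu (m-1) i - mu m k) /
      ((mu m j - mu (m-1) i)^2 * (\<Prod>k\<in>{..<m-1} - {i}. mu (m-1) i - mu (m-1) k))))"

definition poly_Lam :: "complex poly \<Rightarrow> (nat \<Rightarrow> nat \<Rightarrow> complex) \<Rightarrow> nat \<Rightarrow> complex mat" where
  "poly_Lam p mu m = mat_diag m (\<lambda>j. poly p (mu m j))"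

definition Sigma_mat :: "complex mat \<Rightarrow> (nat \<Rightarrow> nat \<Rightarrow> complex) \<Rightarrow> nat \<Rightarrow> complex mat" where
  "Sigma_mat x mu m = - (poly_Lam (Pk x (Suc m)) mu m * mat_inv (poly_Lam (pderiv (Pk x m)) mu m))"

end

theory Submission
  imports Defs
begin


lemma det_diag_like:
  fixes M :: "'a::comm_ring_1 mat"
  assumes M: "M \<in> carrier_mat p p" and off: "\<And>i k. i<p \<Longrightarrow> k<p \<Longrightarrow> i\<noteq>k \<Longrightarrow> M$$(i,k) = 0"
  shows "det M = (\<Prod>k<p. M$$(k,k))"
proof -
  have ut: "upper_triangular M" using M off unfolding upper_triangular_def by auto
  show ?thesis using det_upper_triangular[OF ut M] M by (simp add: prod_list_diag_prod atLeast0LessThan)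
qed

lemma insert_index_bij: assumes j: "j < Suc q"
  shows "bij_betw (insert_index j) {..<q} ({..<Suc q} - {j})"
proof (rule bij_betw_imageI)
  show "inj_on (insert_index j) {..<q}" by (auto simp: inj_on_def insert_index_def split: if_splits)
  show "insert_index j ` {..<q} = {..<Suc q} - {j}"
  proof (rule equalityI)
    show "insert_index j ` {..<q} \<subseteq> {..<Suc q} - {j}"
      by (auto simp: insert_index_def split: if_splits)
  next
    show "{..<Suc q} - {j} \<subseteq> insert_index j ` {..<q}"
    proof
    fix y assume y: "y \<in> {..<Suc q} - {j}"
    show "y \<in> insert_index j ` {..<q}"
    proof (cases "y < j")
      case True then show ?thesis using y j by (intro image_eqI[of _ _ y]) (auto simp: insert_index_def)
    next
      case False then have "y = Suc (y - 1)" "y - 1 \<ge> j" using y by auto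
      then show ?thesis using y by (intro image_eqI[of _ _ "y - 1"]) (auto simp: insert_index_def)
    qed
    qed
  qed
qed

lemma arrow_det:
  fixes E :: "'a::comm_ring_1 mat"
  assumes E: "E \<in> carrier_mat (Suc p) (Suc p)"
    and off: "\<And>i k. i<p \<Longrightarrow> k<p \<Longrightarrow> i\<noteq>k \<Longrightarrow> E$$(i,k) = 0"
  shows "det E = E$$(p,p) * (\<Prod>k<p. E$$(k,k))
           - (\<Sum>i<p. E$$(p,i) * E$$(i,p) * (\<Prod>k\<in>{..<p}-{i}. E$$(k,k)))"
proof -
  have lap: "det E = (\<Sum>j<Suc p. E $$ (p,j) * cofactor E p j)"
    by (rule laplace_expansion_row[OF E], simp)
  have last: "cofactor E p p = (\<Prod>k<p. E$$(k,k))"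
  proof -
    have "det (mat_delete E p p) = (\<Prod>k<p. mat_delete E p p $$ (k,k))"
      by (rule det_diag_like) (use E off in \<open>auto simp: mat_delete_def\<close>)
    also have "\<dots> = (\<Prod>k<p. E$$(k,k))"
      by (rule prod.cong) (use E in \<open>auto simp: mat_delete_def\<close>)
    finally show ?thesis unfolding cofactor_def by simp
  qed
  have other: "cofactor E p j = - (E$$(j,p) * (\<Prod>k\<in>{..<p}-{j}. E$$(k,k)))" if j: "j < p" for j
  proof -
    define M where "M = mat_delete E p j"
    obtain q where q: "p = Suc q" using j by (cases p) auto
    have M: "M \<in> carrier_mat p p" unfolding M_def using E by (auto simp: mat_delete_def)
    have Mij: "M $$ (a,b) = E $$ (a, insert_index j b)" if "a < p" "b < p" for a b
      using that E unfolding M_def by (auto simp: mat_delete_def insert_index_def)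
    have "det M = (\<Sum>l<p. M $$ (j,l) * cofactor M j l)"
      by (rule laplace_expansion_row[OF M j])
    also have "\<dots> = M $$ (j,q) * cofactor M j q"
    proof -
      have "(\<Sum>l<p. M $$ (j,l) * cofactor M j l) = (\<Sum>l<q. M $$ (j,l) * cofactor M j l) + M $$ (j,q) * cofactor M j q"
        unfolding q by simp
      also have "(\<Sum>l<q. M $$ (j,l) * cofactor M j l) = 0"
      proof (rule sum.neutral, intro ballI)
        fix l assume l: "l \<in> {..<q}"
        have "M $$ (j,l) = E $$ (j, insert_index j l)" using l j q by (intro Mij) auto
        also have "\<dots> = 0" using l j q by (intro off) (auto simp: insert_index_def)
        finally show "M $$ (j,l) * cofactor M j l = 0" by simp
      qed
      finally show ?thesis by simp
    qed
    also have "M $$ (j,q) = E $$ (j,p)" using j q by (subst Mij) (auto simp: insert_index_def)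
    also have "cofactor M j q = (-1)^(j+q) * (\<Prod>k\<in>{..<p}-{j}. E$$(k,k))"
    proof -
      have "det (mat_delete M j q) = (\<Prod>a<q. mat_delete M j q $$ (a,a))"
        by (rule det_diag_like) (use M q j in \<open>auto simp: mat_delete_def Mij insert_index_def intro!: off\<close>)
      also have "\<dots> = (\<Prod>a<q. E $$ (insert_index j a, insert_index j a))"
        by (rule prod.cong) (use M q j in \<open>auto simp: mat_delete_def Mij insert_index_def\<close>)
      also have "\<dots> = (\<Prod>k\<in>{..<p}-{j}. E$$(k,k))"
        using prod.reindex_bij_betw[OF insert_index_bij[of j q], of "\<lambda>k. E$$(k,k)"] j q by simp
      finally show ?thesis unfolding cofactor_def by simp
    qed
    finally have dM: "det M = E $$ (j,p) * ((-1)^(j+q) * (\<Prod>k\<in>{..<p}-{j}. E$$(k,k)))" .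
    have sgn: "(-1::'a)^(p+j) * (-1)^(j+q) = -1"
    proof -
      have "(-1::'a)^(p+j) * (-1)^(j+q) = (-1)^(p+j+(j+q))" by (simp add: power_add)
      also have "p+j+(j+q) = Suc (2*(j+q))" unfolding q by simp
      also have "(-1::'a)^(Suc (2*(j+q))) = -1" by (simp only: power_Suc power_mult) simp
      finally show ?thesis .
    qed
    have "cofactor E p j = ((-1)^(p+j) * (-1)^(j+q)) * (E $$ (j,p) * (\<Prod>k\<in>{..<p}-{j}. E$$(k,k)))"
      unfolding cofactor_def M_def[symmetric] dM by (simp only: mult_ac)
    then show ?thesis unfolding sgn by simp
  qed
  have "det E = (\<Sum>j<p. E $$ (p,j) * cofactor E p j) + E $$ (p,p) * cofactor E p p"
    unfolding lap by simp
  also have "(\<Sum>j<p. E $$ (p,j) * cofactor E p j) = - (\<Sum>i<p. E$$(p,i) * E$$(i,p) * (\<Prod>k\<in>{..<p}-{i}. E$$(k,k)))"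
    by (simp add: other sum_negf[symmetric] algebra_simps)
  finally show ?thesis unfolding last by (simp add: algebra_simps)
qed



lemma lead_carrier[simp]: "lead x k \<in> carrier_mat k k"
  unfolding lead_def by simp

lemma lead_index[simp]: "i<k \<Longrightarrow> j<k \<Longrightarrow> lead x k $$ (i,j) = x $$ (i,j)"
  unfolding lead_def by simp

lemma lead_dims[simp]: "dim_row (lead x k) = k" "dim_col (lead x k) = k"
  unfolding lead_def by simp_all

lemma lead_transpose: "x \<in> carrier_mat n n \<Longrightarrow> k \<le> n \<Longrightarrow> lead (transpose_mat x) k = transpose_mat (lead x k)"
  by (rule eq_matI) auto

lemma eigs_Pk: "eigs x k = {l. poly (Pk x k) l = 0}"
  unfolding eigs_def Pk_def using eigenvalue_root_char_poly[OF lead_carrier] by auto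

lemma Pk_transpose: "x \<in> carrier_mat n n \<Longrightarrow> k \<le> n \<Longrightarrow> Pk (transpose_mat x) k = Pk x k"
  unfolding Pk_def by (simp add: lead_transpose char_poly_transpose_mat[OF lead_carrier])

lemma eigs_transpose: "x \<in> carrier_mat n n \<Longrightarrow> k \<le> n \<Longrightarrow> eigs (transpose_mat x) k = eigs x k"
  unfolding eigs_Pk by (simp add: Pk_transpose)

lemma generic_transpose: assumes g: "generic n x" shows "generic n (transpose_mat x)"
proof -
  have xc: "x \<in> carrier_mat n n" using g unfolding generic_def by auto
  have "\<forall>k\<in>{1..n}. card (eigs (transpose_mat x) k) = k"
    using g eigs_transpose[OF xc] unfolding generic_def by auto
  moreover have "\<forall>k\<in>{1..n-1}. eigs (transpose_mat x) k \<inter> eigs (transpose_mat x) (Suc k) = {}"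
  proof
    fix k assume k: "k \<in> {1..n-1}"
    then have "eigs (transpose_mat x) k = eigs x k" "eigs (transpose_mat x) (Suc k) = eigs x (Suc k)"
      using eigs_transpose[OF xc] by auto
    then show "eigs (transpose_mat x) k \<inter> eigs (transpose_mat x) (Suc k) = {}"
      using g k unfolding generic_def by auto
  qed
  ultimately show ?thesis using xc unfolding generic_def by auto
qed

lemma eig_ordering_transpose: "generic n x \<Longrightarrow> eig_ordering n x mu \<Longrightarrow> eig_ordering n (transpose_mat x) mu"
  unfolding eig_ordering_def generic_def by (auto simp: eigs_transpose)

lemma pderiv_prod_root:
  fixes c :: "nat \<Rightarrow> 'a::idom"
  assumes S: "finite S" and j: "j \<in> S"
  shows "poly (pderiv (\<Prod>i\<in>S. [:- c i, 1:])) (c j) = (\<Prod>i\<in>S-{j}. c j - c i)"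
proof -
  have "(\<Prod>i\<in>S. [:- c i, 1:]) = [:- c j, 1:] * (\<Prod>i\<in>S-{j}. [:- c i, 1:])"
    by (rule prod.remove[OF S j])
  then show ?thesis by (simp add: pderiv_mult poly_prod pderiv_pCons del: mult_pCons_left)
qed

locale gen =
  fixes n :: nat and x :: "complex mat" and mu :: "nat \<Rightarrow> nat \<Rightarrow> complex"
  assumes gen: "generic n x" and ord: "eig_ordering n x mu"
begin

lemma xc: "x \<in> carrier_mat n n" using gen unfolding generic_def by auto

lemma mu_bij: "1 \<le> k \<Longrightarrow> k \<le> n \<Longrightarrow> bij_betw (mu k) {..<k} (eigs x k)"
  using ord unfolding eig_ordering_def by auto

lemma mu_inj: "1 \<le> k \<Longrightarrow> k \<le> n \<Longrightarrow> i < k \<Longrightarrow> j < k \<Longrightarrow> mu k i = mu k j \<Longrightarrow> i = j"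
  using mu_bij unfolding bij_betw_def inj_on_def by blast

lemma mu_eig: "1 \<le> k \<Longrightarrow> k \<le> n \<Longrightarrow> i < k \<Longrightarrow> mu k i \<in> eigs x k"
  using mu_bij unfolding bij_betw_def by blast

lemma Pk_root: "1 \<le> k \<Longrightarrow> k \<le> n \<Longrightarrow> i < k \<Longrightarrow> poly (Pk x k) (mu k i) = 0"
  using mu_eig unfolding eigs_Pk by blast

lemma mu_disj: "1 \<le> k \<Longrightarrow> Suc k \<le> n \<Longrightarrow> i < k \<Longrightarrow> l < Suc k \<Longrightarrow> mu k i \<noteq> mu (Suc k) l"
proof
  assume k: "1 \<le> k" "Suc k \<le> n" "i < k" "l < Suc k" and eq: "mu k i = mu (Suc k) l"
  have "mu k i \<in> eigs x k" using mu_eig k by auto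
  moreover have "mu k i \<in> eigs x (Suc k)" unfolding eq using mu_eig k by auto
  moreover have "eigs x k \<inter> eigs x (Suc k) = {}" using gen k unfolding generic_def by auto
  ultimately show False by blast
qed

lemma P_next_nonzero: "1 \<le> k \<Longrightarrow> Suc k \<le> n \<Longrightarrow> i < k \<Longrightarrow> poly (Pk x (Suc k)) (mu k i) \<noteq> 0"
proof
  assume k: "1 \<le> k" "Suc k \<le> n" "i < k" and z: "poly (Pk x (Suc k)) (mu k i) = 0"
  have "mu k i \<in> eigs x k" using mu_eig k by auto
  moreover have "mu k i \<in> eigs x (Suc k)" using z unfolding eigs_Pk by auto
  moreover have "eigs x k \<inter> eigs x (Suc k) = {}" using gen k unfolding generic_def by auto
  ultimately show False by blast
qed

lemma Pk_prod: assumes k: "1 \<le> k" "k \<le> n" shows "Pk x k = (\<Prod>i<k. [:- mu k i, 1:])"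
proof -
  obtain as where cp: "Pk x k = (\<Prod>a\<leftarrow>as. [:- a, 1:])" and len: "length as = k"
    using char_poly_factorized[OF lead_carrier[of x k]] unfolding Pk_def by blast
  have "eigs x k = set as"
    unfolding eigs_Pk cp poly_prod_list by (auto simp: prod_list_zero_iff)
  moreover have "card (eigs x k) = k" using gen k unfolding generic_def by auto
  ultimately have d: "distinct as" using len card_distinct by metis
  have "Pk x k = (\<Prod>a\<in>eigs x k. [:- a, 1:])"
    unfolding cp \<open>eigs x k = set as\<close> prod.distinct_set_conv_list[OF d] by simp
  also have "\<dots> = (\<Prod>i<k. [:- mu k i, 1:])"
    using prod.reindex_bij_betw[OF mu_bij[OF k], of "\<lambda>a. [:- a, 1:]"] by simp
  finally show ?thesis .
qed

lemma Pk_poly: "1 \<le> k \<Longrightarrow> k \<le> n \<Longrightarrow> poly (Pk x k) l = (\<Prod>i<k. l - mu k i)"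
  by (simp add: Pk_prod poly_prod)

lemma Pk_deriv: "1 \<le> k \<Longrightarrow> k \<le> n \<Longrightarrow> j < k \<Longrightarrow>
  poly (pderiv (Pk x k)) (mu k j) = (\<Prod>i\<in>{..<k}-{j}. mu k j - mu k i)"
  by (simp add: Pk_prod pderiv_prod_root)

lemma Pk_deriv_nz: assumes "1 \<le> k" "k \<le> n" "j < k" shows "poly (pderiv (Pk x k)) (mu k j) \<noteq> 0"
  unfolding Pk_deriv[OF assms] using assms mu_inj[OF assms(1,2)] by auto

end



definition blk :: "nat \<Rightarrow> complex mat \<Rightarrow> complex mat" where
  "blk m P = four_block_mat P (0\<^sub>m m 1) (0\<^sub>m 1 m) (1\<^sub>m 1)"

lemma blk_carrier[simp]: "P \<in> carrier_mat m m \<Longrightarrow> blk m P \<in> carrier_mat (Suc m) (Suc m)"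
  unfolding blk_def using four_block_carrier_mat[of P m m "1\<^sub>m 1" 1 1] by simp

lemma blk_dims[simp]: "dim_row (blk m P) = dim_row P + 1" "dim_col (blk m P) = dim_col P + 1"
  unfolding blk_def by simp_all

lemma mult_entry: "A \<in> carrier_mat a b \<Longrightarrow> B \<in> carrier_mat b c \<Longrightarrow> i < a \<Longrightarrow> j < c \<Longrightarrow>
  (A * B) $$ (i,j) = (\<Sum>k<b. A $$ (i,k) * B $$ (k,j))"
  by (simp add: scalar_prod_def atLeast0LessThan)

lemma blk_index: "P \<in> carrier_mat m m \<Longrightarrow> i < Suc m \<Longrightarrow> j < Suc m \<Longrightarrow>
  blk m P $$ (i,j) = (if i < m \<and> j < m then P $$ (i,j) else if i = m \<and> j = m then 1 else 0)"
  unfolding blk_def by auto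

lemma blk_mult: assumes P: "P \<in> carrier_mat m m" and Q: "Q \<in> carrier_mat m m"
  shows "blk m P * blk m Q = blk m (P * Q)"
  unfolding blk_def
  by (subst mult_four_block_mat[OF P zero_carrier_mat zero_carrier_mat one_carrier_mat Q zero_carrier_mat zero_carrier_mat one_carrier_mat])
     (use P Q in auto)

lemma blk_one: "blk m (1\<^sub>m m) = 1\<^sub>m (Suc m)"
  unfolding blk_def using four_block_one_mat[of m 1] by simp

lemma inv_right: assumes A: "A \<in> carrier_mat m m" and B: "B \<in> carrier_mat m m" and AB: "A * B = 1\<^sub>m m"
  shows "invertible_mat A" "mat_inv A = B" "B * A = 1\<^sub>m m"
proof -
  show BA: "B * A = 1\<^sub>m m" by (rule mat_mult_left_right_inverse[OF A B AB])
  show "invertible_mat A" unfolding invertible_mat_def inverts_mat_def square_mat.simps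
    using A B AB BA by auto
  show "mat_inv A = B" unfolding mat_inv_def
  proof (rule the_equality)
    show "B \<in> carrier_mat (dim_row A) (dim_row A) \<and> inverts_mat A B \<and> inverts_mat B A"
      using A B AB BA unfolding inverts_mat_def by auto
  next
    fix C assume "C \<in> carrier_mat (dim_row A) (dim_row A) \<and> inverts_mat A C \<and> inverts_mat C A"
    then have C: "C \<in> carrier_mat m m" and CA: "C * A = 1\<^sub>m m" using A unfolding inverts_mat_def by auto
    have "C = C * (A * B)" using C AB by simp
    also have "\<dots> = (C * A) * B" using A B C by (simp add: assoc_mult_mat)
    also have "\<dots> = B" using CA B by simp
    finally show "C = B" .
  qed
qed

lemma inv_props: assumes A: "A \<in> carrier_mat m m" and inv: "invertible_mat A"
  shows "mat_inv A \<in> carrier_mat m m" "A * mat_inv A = 1\<^sub>m m" "mat_inv A * A = 1\<^sub>m m"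
proof -
  obtain B where AB: "A * B = 1\<^sub>m m" and BA: "B * A = 1\<^sub>m (dim_row B)"
    using inv A unfolding invertible_mat_def inverts_mat_def by auto
  have "dim_col B = m" using arg_cong[OF AB, of dim_col] by simp
  moreover have "dim_row B = m" using arg_cong[OF BA, of dim_col] A by simp
  ultimately have B: "B \<in> carrier_mat m m" by auto
  from inv_right[OF A B AB] B AB show "mat_inv A \<in> carrier_mat m m" "A * mat_inv A = 1\<^sub>m m" "mat_inv A * A = 1\<^sub>m m"
    by auto
qed

lemma mat_inv_diag: assumes nz: "\<And>j. j < m \<Longrightarrow> f j \<noteq> 0"
  shows "mat_inv (mat_diag m f) = mat_diag m (\<lambda>j. inverse (f j))"
proof -
  have "mat_diag m f * mat_diag m (\<lambda>j. inverse (f j)) = mat_diag m (\<lambda>j. 1)"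
    unfolding mat_diag_diag using nz by (intro eq_matI) (auto simp: mat_diag_def)
  then have "mat_diag m f * mat_diag m (\<lambda>j. inverse (f j)) = 1\<^sub>m m" by simp
  then show ?thesis using inv_right(2)[OF mat_diag_dim mat_diag_dim] by blast
qed

lemma Lam_carrier[simp]: "Lam mu m \<in> carrier_mat m m" unfolding Lam_def by simp

lemma Lam_dims[simp]: "dim_row (Lam mu m) = m" "dim_col (Lam mu m) = m" unfolding Lam_def mat_diag_def by simp_all

lemma Lam_index: "i < m \<Longrightarrow> j < m \<Longrightarrow> Lam mu m $$ (i,j) = (if i = j then mu m i else 0)"
  unfolding Lam_def mat_diag_def by auto

lemma Lam_transpose[simp]: "transpose_mat (Lam mu m) = Lam mu m"
  by (rule eq_matI) (auto simp: Lam_def mat_diag_def)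

lemma Lam_left: "A \<in> carrier_mat m k \<Longrightarrow> i < m \<Longrightarrow> j < k \<Longrightarrow> (Lam mu m * A) $$ (i,j) = mu m i * A $$ (i,j)"
  unfolding Lam_def using mat_diag_mult_left[of A m k "mu m"] by simp

lemma Lam_right: "A \<in> carrier_mat k m \<Longrightarrow> i < k \<Longrightarrow> j < m \<Longrightarrow> (A * Lam mu m) $$ (i,j) = A $$ (i,j) * mu m j"
  unfolding Lam_def using mat_diag_mult_right[of A k m "mu m"] by simp

definition gprop :: "complex mat \<Rightarrow> (nat \<Rightarrow> nat \<Rightarrow> complex) \<Rightarrow> nat \<Rightarrow> complex mat \<Rightarrow> bool" where
  "gprop x mu m g \<longleftrightarrow> g \<in> carrier_mat m m \<and> invertible_mat g
      \<and> lead x m = g * Lam mu m * mat_inv g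
      \<and> (\<forall>j<m. g $$ (m - 1, j) = 1)"

lemma dual_g_prop: "\<exists>!g. gprop x mu m g \<Longrightarrow> gprop x mu m (dual_g x mu m)"
  unfolding dual_g_def gprop_def[symmetric] by (rule theI')

lemma gprop_eig: assumes "gprop x mu m g"
  shows "lead x m * g = g * Lam mu m" "mat_inv g * lead x m = Lam mu m * mat_inv g"
proof -
  have g: "g \<in> carrier_mat m m" and inv: "invertible_mat g" and A: "lead x m = g * Lam mu m * mat_inv g"
    using assms unfolding gprop_def by auto
  note gi = inv_props[OF g inv]
  have L: "g * Lam mu m \<in> carrier_mat m m" using g by simp
  have "lead x m * g = (g * Lam mu m) * (mat_inv g * g)" unfolding A
    by (rule assoc_mult_mat[OF L gi(1) g])
  also have "\<dots> = g * Lam mu m" using gi g by simp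
  finally show "lead x m * g = g * Lam mu m" .
  have "mat_inv g * lead x m = mat_inv g * (g * (Lam mu m * mat_inv g))" unfolding A
    using g gi by (simp add: assoc_mult_mat[OF g Lam_carrier gi(1)])
  also have "\<dots> = (mat_inv g * g) * (Lam mu m * mat_inv g)"
    by (rule assoc_mult_mat[symmetric, OF gi(1) g mult_carrier_mat[OF Lam_carrier gi(1)]])
  also have "\<dots> = Lam mu m * mat_inv g" using gi g by simp
  finally show "mat_inv g * lead x m = Lam mu m * mat_inv g" .
qed

lemma commute_Lam_offdiag: assumes M: "M \<in> carrier_mat m m" and c: "Lam mu m * M = M * Lam mu m"
  and i: "i < m" and j: "j < m" and ne: "mu m i \<noteq> mu m j"
  shows "M $$ (i,j) = 0"
proof -
  have "mu m i * M $$ (i,j) = M $$ (i,j) * mu m j"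
    using arg_cong[OF c, of "\<lambda>A. A $$ (i,j)"] Lam_left[OF M i j] Lam_right[OF M i j] by simp
  then show ?thesis using ne by (simp add: algebra_simps)
qed



lemma sum_single: assumes "finite S" "j \<in> S" "\<And>k. k \<in> S \<Longrightarrow> k \<noteq> j \<Longrightarrow> f k = 0"
  shows "sum f S = f j"
proof -
  have "sum f S = f j + sum f (S - {j})" by (rule sum.remove[OF assms(1,2)])
  also have "sum f (S - {j}) = 0" using assms(3) by (intro sum.neutral) auto
  finally show ?thesis by simp
qed

lemma conj_cancel: fixes P Q X :: "complex mat" assumes P: "P \<in> carrier_mat n n" and Q: "Q \<in> carrier_mat n n"
  and X: "X \<in> carrier_mat n n" and PQ: "P * Q = 1\<^sub>m n"
  shows "P * (Q * X * P) * Q = X"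
proof -
  have "P * (Q * X * P) * Q = P * (Q * X * (P * Q))"
    using P Q X by (simp add: assoc_mult_mat[of _ n n _ n _ n])
  also have "\<dots> = P * (Q * X)" using PQ right_mult_one_mat[OF mult_carrier_mat[OF Q X]] by simp
  also have "\<dots> = (P * Q) * X" using P Q X by (simp add: assoc_mult_mat[of _ n n _ n _ n])
  also have "\<dots> = X" using PQ X by simp
  finally show ?thesis .
qed

lemma lead_four_block: "lead x (Suc k) = four_block_mat (lead x k) (mat k 1 (\<lambda>(i,_). x$$(i,k)))
   (mat 1 k (\<lambda>(_,j). x$$(k,j))) (mat 1 1 (\<lambda>_. x$$(k,k)))"
  by (rule eq_matI) (auto simp: less_Suc_eq)

lemma blk_conj: assumes P: "P \<in> carrier_mat k k" and Q: "Q \<in> carrier_mat k k" and A: "A \<in> carrier_mat k k"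
  and c: "c \<in> carrier_mat k 1" and r: "r \<in> carrier_mat 1 k" and d: "d \<in> carrier_mat 1 1"
shows "blk k P * four_block_mat A c r d * blk k Q = four_block_mat (P*A*Q) (P*c) (r*Q) d"
proof -
  have "blk k P * four_block_mat A c r d = four_block_mat (P * A + 0\<^sub>m k 1 * r) (P * c + 0\<^sub>m k 1 * d)
      (0\<^sub>m 1 k * A + 1\<^sub>m 1 * r) (0\<^sub>m 1 k * c + 1\<^sub>m 1 * d)"
    unfolding blk_def by (rule mult_four_block_mat[OF P zero_carrier_mat zero_carrier_mat one_carrier_mat A c r d])
  also have "\<dots> = four_block_mat (P * A) (P * c) r d" using P A c r d by simp
  also have "\<dots> * blk k Q = four_block_mat (P * A * Q + P * c * 0\<^sub>m 1 k) (P * A * 0\<^sub>m k 1 + P * c * 1\<^sub>m 1)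
      (r * Q + d * 0\<^sub>m 1 k) (r * 0\<^sub>m k 1 + d * 1\<^sub>m 1)"
    unfolding blk_def by (rule mult_four_block_mat) (use P A c r d Q in auto)
  also have "\<dots> = four_block_mat (P*A*Q) (P*c) (r*Q) d" using P A c r d Q by simp
  finally show ?thesis .
qed

lemma char_poly_arrow:
  fixes B :: "'a::field mat"
  assumes B: "B \<in> carrier_mat (Suc k) (Suc k)" and off: "\<And>i j. i<k \<Longrightarrow> j<k \<Longrightarrow> i\<noteq>j \<Longrightarrow> B$$(i,j) = 0"
  shows "poly (char_poly B) l = (l - B$$(k,k)) * (\<Prod>i<k. l - B$$(i,i))
     - (\<Sum>i<k. B$$(k,i) * B$$(i,k) * (\<Prod>j\<in>{..<k}-{i}. l - B$$(j,j)))"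
proof -
  let ?E = "- char_matrix B l"
  have E: "?E \<in> carrier_mat (Suc k) (Suc k)" using B by simp
  have Eij: "?E $$ (i,j) = (if i = j then l else 0) - B $$ (i,j)" if "i < Suc k" "j < Suc k" for i j
    using B that by (simp add: char_matrix_def)
  have "poly (char_poly B) l = det ?E" by (rule char_poly_matrix[OF B])
  also have "\<dots> = ?E$$(k,k) * (\<Prod>i<k. ?E$$(i,i)) - (\<Sum>i<k. ?E$$(k,i) * ?E$$(i,k) * (\<Prod>j\<in>{..<k}-{i}. ?E$$(j,j)))"
    by (rule arrow_det[OF E]) (simp add: Eij off)
  also have "\<dots> = (l - B$$(k,k)) * (\<Prod>i<k. l - B$$(i,i))
     - (\<Sum>i<k. B$$(k,i) * B$$(i,k) * (\<Prod>j\<in>{..<k}-{i}. l - B$$(j,j)))"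
    by (simp add: Eij)
  finally show ?thesis .
qed

context gen begin

lemma gprop_unique: assumes m: "1 \<le> m" "m \<le> n" and G: "gprop x mu m g" and G': "gprop x mu m g'"
  shows "g = g'"
proof -
  have g: "g \<in> carrier_mat m m" and inv: "invertible_mat g" using G unfolding gprop_def by auto
  have g': "g' \<in> carrier_mat m m" and l1: "\<And>j. j < m \<Longrightarrow> g' $$ (m-1,j) = 1" and l0: "\<And>j. j < m \<Longrightarrow> g $$ (m-1,j) = 1"
    using G G' unfolding gprop_def by auto
  note gi = inv_props[OF g inv]
  define M where "M = mat_inv g * g'"
  have M: "M \<in> carrier_mat m m" unfolding M_def using gi g' by simp
  have "Lam mu m * M = (Lam mu m * mat_inv g) * g'" unfolding M_def
    by (rule assoc_mult_mat[symmetric, OF Lam_carrier gi(1) g'])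
  also have "\<dots> = (mat_inv g * lead x m) * g'" using gprop_eig(2)[OF G] by simp
  also have "\<dots> = mat_inv g * (lead x m * g')" by (rule assoc_mult_mat[OF gi(1) lead_carrier g'])
  also have "\<dots> = mat_inv g * (g' * Lam mu m)" using gprop_eig(1)[OF G'] by simp
  also have "\<dots> = M * Lam mu m" unfolding M_def by (rule assoc_mult_mat[symmetric, OF gi(1) g' Lam_carrier])
  finally have c: "Lam mu m * M = M * Lam mu m" .
  have off: "M $$ (i,j) = 0" if "i < m" "j < m" "i \<noteq> j" for i j
    using commute_Lam_offdiag[OF M c that(1,2)] mu_inj[OF m] that by blast
  have gM: "g * M = g'" unfolding M_def using gi g g' by (simp add: assoc_mult_mat[symmetric, OF g gi(1) g'])
  have diag1: "M $$ (j,j) = 1" if j: "j < m" for j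
  proof -
    have "1 = g' $$ (m-1, j)" using l1 j by simp
    also have "\<dots> = (\<Sum>k<m. g $$ (m-1,k) * M $$ (k,j))" unfolding gM[symmetric]
      by (rule mult_entry[OF g M]) (use m j in auto)
    also have "\<dots> = (\<Sum>k<m. M $$ (k,j))" using l0 by simp
    also have "\<dots> = M $$ (j,j)" by (rule sum_single) (use j off in auto)
    finally show ?thesis by simp
  qed
  have "M = 1\<^sub>m m" by (rule eq_matI) (use M off diag1 in auto)
  then show ?thesis using gM g by simp
qed

lemma lvl: assumes k: "1 \<le> k" "Suc k \<le> n" and G: "gprop x mu k g"
  defines "B \<equiv> blk k (mat_inv g) * lead x (Suc k) * blk k g"
  shows "B \<in> carrier_mat (Suc k) (Suc k)"
    "\<And>i j. i<k \<Longrightarrow> j<k \<Longrightarrow> B$$(i,j) = (if i = j then mu k i else 0)"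
    "\<And>j. j<k \<Longrightarrow> B$$(k,j) = (\<Sum>l<k. x$$(k,l) * g$$(l,j))"
    "\<And>j. j<k \<Longrightarrow> B$$(j,k) = (\<Sum>l<k. mat_inv g $$ (j,l) * x$$(l,k))"
    "B$$(k,k) = x$$(k,k)"
    "lead x (Suc k) = blk k g * B * blk k (mat_inv g)"
    "char_poly B = Pk x (Suc k)"
proof -
  have g: "g \<in> carrier_mat k k" and inv: "invertible_mat g" using G unfolding gprop_def by auto
  note gi = inv_props[OF g inv]
  let ?c = "mat k 1 (\<lambda>(i,_). x$$(i,k))" and ?r = "mat 1 k (\<lambda>(_,j). x$$(k,j))" and ?d = "mat 1 1 (\<lambda>_. x$$(k,k))"
  have "mat_inv g * lead x k * g = Lam mu k * mat_inv g * g" using gprop_eig(2)[OF G] by simp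
  also have "\<dots> = Lam mu k * (mat_inv g * g)" by (rule assoc_mult_mat[OF Lam_carrier gi(1) g])
  also have "\<dots> = Lam mu k" using gi by simp
  finally have AL: "mat_inv g * lead x k * g = Lam mu k" .
  have Bf: "B = four_block_mat (Lam mu k) (mat_inv g * ?c) (?r * g) ?d"
    unfolding B_def lead_four_block[of x k] AL[symmetric]
    by (rule blk_conj[OF gi(1) g lead_carrier]) auto
  show Bc: "B \<in> carrier_mat (Suc k) (Suc k)" unfolding B_def
    by (rule mult_carrier_mat[OF mult_carrier_mat[OF blk_carrier[OF gi(1)] lead_carrier] blk_carrier[OF g]])
  show "\<And>i j. i<k \<Longrightarrow> j<k \<Longrightarrow> B$$(i,j) = (if i = j then mu k i else 0)"
    unfolding Bf using gi g by (simp add: Lam_index)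
  show "\<And>j. j<k \<Longrightarrow> B$$(k,j) = (\<Sum>l<k. x$$(k,l) * g$$(l,j))"
    unfolding Bf using gi g by (simp add: scalar_prod_def atLeast0LessThan)
  show "\<And>j. j<k \<Longrightarrow> B$$(j,k) = (\<Sum>l<k. mat_inv g $$ (j,l) * x$$(l,k))"
    unfolding Bf using gi g by (simp add: scalar_prod_def atLeast0LessThan)
  show "B$$(k,k) = x$$(k,k)" unfolding Bf using gi g by simp
  have b1: "blk k g * blk k (mat_inv g) = 1\<^sub>m (Suc k)" using blk_mult[OF g gi(1)] gi blk_one by simp
  have b2: "blk k (mat_inv g) * blk k g = 1\<^sub>m (Suc k)" using blk_mult[OF gi(1) g] gi blk_one by simp
  have bg: "blk k g \<in> carrier_mat (Suc k) (Suc k)" and bgi: "blk k (mat_inv g) \<in> carrier_mat (Suc k) (Suc k)"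
    using g gi by auto
  have X: "lead x (Suc k) \<in> carrier_mat (Suc k) (Suc k)" by simp
  have "blk k g * B * blk k (mat_inv g) = lead x (Suc k)"
    unfolding B_def by (rule conj_cancel[OF bg bgi X b1])
  then show lx: "lead x (Suc k) = blk k g * B * blk k (mat_inv g)" by simp
  have "similar_mat B (lead x (Suc k))"
    by (rule similar_matI[where n="Suc k" and P="blk k (mat_inv g)" and Q="blk k g"]) (use Bc bg bgi b1 b2 in \<open>auto simp: B_def\<close>)
  then show "char_poly B = Pk x (Suc k)" unfolding Pk_def by (rule char_poly_similar)
qed

lemma arrow_eig: assumes k: "1 \<le> k" "Suc k \<le> n" and G: "gprop x mu k g" and j: "j < k"
  defines "B \<equiv> blk k (mat_inv g) * lead x (Suc k) * blk k g"
  shows "B$$(k,j) * B$$(j,k) * (\<Prod>l\<in>{..<k}-{j}. mu k j - mu k l) = - poly (Pk x (Suc k)) (mu k j)"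
proof -
  note L = lvl[OF k G, folded B_def]
  have "poly (Pk x (Suc k)) (mu k j) = (mu k j - B$$(k,k)) * (\<Prod>i<k. mu k j - B$$(i,i))
     - (\<Sum>i<k. B$$(k,i) * B$$(i,k) * (\<Prod>l\<in>{..<k}-{i}. mu k j - B$$(l,l)))"
    unfolding L(7)[symmetric] by (rule char_poly_arrow[OF L(1)]) (simp add: L(2))
  also have "(\<Prod>i<k. mu k j - B$$(i,i)) = 0" using j by (simp add: L(2) prod_zero_iff) (use j in blast)
  also have "(\<Sum>i<k. B$$(k,i) * B$$(i,k) * (\<Prod>l\<in>{..<k}-{i}. mu k j - B$$(l,l)))
      = B$$(k,j) * B$$(j,k) * (\<Prod>l\<in>{..<k}-{j}. mu k j - B$$(l,l))"
    by (rule sum_single) (use j in \<open>auto simp: L(2) prod_zero_iff\<close>)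
  also have "(\<Prod>l\<in>{..<k}-{j}. mu k j - B$$(l,l)) = (\<Prod>l\<in>{..<k}-{j}. mu k j - mu k l)"
    by (rule prod.cong) (auto simp: L(2))
  finally show ?thesis by simp
qed

end



lemma deriv_recip: assumes "y \<noteq> c"
  shows "((\<lambda>l. a / (l - c)) has_field_derivative (- a / (y - c)^2)) (at (y::complex))"
proof -
  have "((\<lambda>l. a / (l - c)) has_field_derivative ((0 * (y - c) - a * 1) / ((y - c) * (y - c)))) (at y)"
    by (rule DERIV_divide) (auto intro!: derivative_eq_intros simp: assms)
  then show ?thesis by (simp add: power2_eq_square)
qed

lemma open_avoid: "finite F \<Longrightarrow> open (UNIV - F :: complex set)"
  by (simp add: finite_imp_closed open_Diff)

lemma deriv_factor:
  fixes P Qp :: "complex poly" and nu :: "nat \<Rightarrow> complex" and a :: "nat \<Rightarrow> complex"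
  assumes eq: "\<And>l. l \<notin> nu ` {..<k} \<Longrightarrow> poly P l = poly Qp l * (l - d - (\<Sum>i<k. a i / (l - nu i)))"
    and y: "y \<notin> nu ` {..<k}" and f0: "y - d - (\<Sum>i<k. a i / (y - nu i)) = 0"
  shows "poly (pderiv P) y = poly Qp y * (1 + (\<Sum>i<k. a i / (y - nu i)^2))"
proof -
  let ?f = "\<lambda>l. l - d - (\<Sum>i<k. a i / (l - nu i))"
  have df: "(?f has_field_derivative (1 - 0 - (\<Sum>i<k. - a i / (y - nu i)^2))) (at y)"
    by (intro derivative_intros DERIV_sum deriv_recip) (use y in auto)
  have dQf: "((\<lambda>l. poly Qp l * ?f l) has_field_derivative
       (poly (pderiv Qp) y * ?f y + (1 - 0 - (\<Sum>i<k. - a i / (y - nu i)^2)) * poly Qp y)) (at y)"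
    by (rule DERIV_mult[OF poly_DERIV df])
  have dP: "(poly P has_field_derivative
       (poly (pderiv Qp) y * ?f y + (1 - 0 - (\<Sum>i<k. - a i / (y - nu i)^2)) * poly Qp y)) (at y)"
    by (rule has_field_derivative_transform_within_open[OF dQf open_avoid[of "nu ` {..<k}"]])
       (use y eq in auto)
  have "poly (pderiv P) y = poly (pderiv Qp) y * ?f y + (1 - 0 - (\<Sum>i<k. - a i / (y - nu i)^2)) * poly Qp y"
    by (rule DERIV_unique[OF poly_DERIV dP])
  also have "\<dots> = poly Qp y * (1 + (\<Sum>i<k. a i / (y - nu i)^2))"
    using f0 by (simp add: sum_negf algebra_simps)
  finally show ?thesis .
qed



lemma cancel_left: fixes P Q Z :: "complex mat"
  assumes P: "P \<in> carrier_mat N N" and Q: "Q \<in> carrier_mat N N" and Z: "Z \<in> carrier_mat N c"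
  and PQ: "P * Q = 1\<^sub>m N" shows "P * (Q * Z) = Z"
proof -
  have "P * (Q * Z) = (P * Q) * Z" by (rule assoc_mult_mat[symmetric, OF P Q Z])
  then show ?thesis using PQ Z by simp
qed

lemma lin3: "(a::complex) - b - s = 0 \<Longrightarrow> s + b = a"
  by (metis add.commute diff_diff_eq eq_iff_diff_eq_0)

context gen begin

lemma step: fixes B V W assumes k: "1 \<le> k" "Suc k \<le> n" and G: "gprop x mu k g"
  and B_def: "B = blk k (mat_inv g) * lead x (Suc k) * blk k g"
  and V_def: "V = mat (Suc k) (Suc k) (\<lambda>(i,j). if i < k then B$$(i,k) / (mu (Suc k) j - mu k i) else 1)"
  and W_def: "W = mat (Suc k) (Suc k) (\<lambda>(i,j). if i < k then B$$(k,i) / (mu (Suc k) j - mu k i) else 1)"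
  shows "gprop x mu (Suc k) (blk k g * V)"
    and "transpose_mat W * B = Lam mu (Suc k) * transpose_mat W"
    and "B * V = V * Lam mu (Suc k)"
proof -
  note L = lvl[OF k G, folded B_def]
  have g: "g \<in> carrier_mat k k" and inv: "invertible_mat g" using G unfolding gprop_def by auto
  note gi = inv_props[OF g inv]
  let ?lam = "mu (Suc k)" and ?nu = "mu k"
  have k1: "1 \<le> Suc k" "Suc k \<le> n" using k by auto
  have ne: "?lam j - ?nu i \<noteq> 0" if "i < k" "j < Suc k" for i j
    using mu_disj[OF k that] by simp
  have AP: "poly (Pk x (Suc k)) l = (l - B$$(k,k)) * (\<Prod>i<k. l - ?nu i)
     - (\<Sum>i<k. B$$(k,i) * B$$(i,k) * (\<Prod>j\<in>{..<k}-{i}. l - ?nu j))" for l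
  proof -
    have "poly (Pk x (Suc k)) l = (l - B$$(k,k)) * (\<Prod>i<k. l - B$$(i,i))
     - (\<Sum>i<k. B$$(k,i) * B$$(i,k) * (\<Prod>j\<in>{..<k}-{i}. l - B$$(j,j)))"
      unfolding L(7)[symmetric] by (rule char_poly_arrow[OF L(1)]) (simp add: L(2))
    also have "(\<Prod>i<k. l - B$$(i,i)) = (\<Prod>i<k. l - ?nu i)" by (rule prod.cong) (auto simp: L(2))
    also have "(\<Sum>i<k. B$$(k,i) * B$$(i,k) * (\<Prod>j\<in>{..<k}-{i}. l - B$$(j,j)))
        = (\<Sum>i<k. B$$(k,i) * B$$(i,k) * (\<Prod>j\<in>{..<k}-{i}. l - ?nu j))"
      by (intro sum.cong refl arg_cong2[where f = "(*)"] prod.cong) (auto simp: L(2))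
    finally show ?thesis .
  qed
  have AP2: "poly (Pk x (Suc k)) l = (\<Prod>i<k. l - ?nu i) * (l - B$$(k,k) - (\<Sum>i<k. B$$(k,i) * B$$(i,k) / (l - ?nu i)))"
    if l: "l \<notin> ?nu ` {..<k}" for l
  proof -
    have Qi: "(\<Prod>j\<in>{..<k}-{i}. l - ?nu j) = (\<Prod>i<k. l - ?nu i) / (l - ?nu i)" if i: "i < k" for i
    proof -
      have "(\<Prod>i<k. l - ?nu i) = (l - ?nu i) * (\<Prod>j\<in>{..<k}-{i}. l - ?nu j)"
        by (rule prod.remove) (use i in auto)
      moreover have "l - ?nu i \<noteq> 0" using l i by auto
      ultimately show ?thesis by simp
    qed
    have "(\<Sum>i<k. B$$(k,i) * B$$(i,k) * (\<Prod>j\<in>{..<k}-{i}. l - ?nu j))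
        = (\<Sum>i<k. (\<Prod>i<k. l - ?nu i) * (B$$(k,i) * B$$(i,k) / (l - ?nu i)))"
      by (rule sum.cong) (auto simp: Qi)
    also have "\<dots> = (\<Prod>i<k. l - ?nu i) * (\<Sum>i<k. B$$(k,i) * B$$(i,k) / (l - ?nu i))"
      by (simp add: sum_distrib_left)
    finally show ?thesis unfolding AP by (simp add: algebra_simps)
  qed
  have notin: "?lam j \<notin> ?nu ` {..<k}" if "j < Suc k" for j
  proof
    assume "?lam j \<in> ?nu ` {..<k}"
    then obtain i where i: "i < k" "?lam j = ?nu i" by auto
    then show False using mu_disj[OF k i(1) that] by simp
  qed
  have Qnz: "(\<Prod>i<k. ?lam j - ?nu i) \<noteq> 0" if "j < Suc k" for j
    using ne that by auto
  have sec: "?lam j - B$$(k,k) - (\<Sum>i<k. B$$(k,i) * B$$(i,k) / (?lam j - ?nu i)) = 0" if j: "j < Suc k" for j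
    using AP2[OF notin[OF j]] Pk_root[OF k1 j] Qnz[OF j] by simp
  define pi where "pi j = 1 + (\<Sum>i<k. B$$(k,i) * B$$(i,k) / (?lam j - ?nu i)^2)" for j
  have pinz: "pi j \<noteq> 0" if j: "j < Suc k" for j
  proof -
    let ?Qp = "\<Prod>i<k. [:- ?nu i, 1:]"
    have pQ: "poly ?Qp l = (\<Prod>i<k. l - ?nu i)" for l by (simp add: poly_prod)
    have "poly (pderiv (Pk x (Suc k))) (?lam j) = poly ?Qp (?lam j) * pi j"
      unfolding pi_def
      by (rule deriv_factor[where nu = "?nu" and d = "B$$(k,k)"]) (use AP2 pQ notin[OF j] sec[OF j] in auto)
    then show ?thesis using Pk_deriv_nz[OF k1 j] by auto
  qed
  have Vc: "V \<in> carrier_mat (Suc k) (Suc k)" and Wc: "W \<in> carrier_mat (Suc k) (Suc k)"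
    and WTc: "transpose_mat W \<in> carrier_mat (Suc k) (Suc k)"
    unfolding V_def W_def by auto
  have Vij: "V$$(i,j) = (if i < k then B$$(i,k) / (?lam j - ?nu i) else 1)" if "i < Suc k" "j < Suc k" for i j
    using that unfolding V_def by simp
  have Wij: "W$$(i,j) = (if i < k then B$$(k,i) / (?lam j - ?nu i) else 1)" if "i < Suc k" "j < Suc k" for i j
    using that unfolding W_def by simp
  show BV: "B * V = V * Lam mu (Suc k)"
  proof (rule eq_matI)
    fix i j assume "i < dim_row (V * Lam mu (Suc k))" "j < dim_col (V * Lam mu (Suc k))"
    then have i: "i < Suc k" and j: "j < Suc k" using Vc by auto
    have "(B * V) $$ (i,j) = (\<Sum>l<Suc k. B$$(i,l) * V$$(l,j))" by (rule mult_entry[OF L(1) Vc i j])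
    also have "\<dots> = (\<Sum>l<k. B$$(i,l) * V$$(l,j)) + B$$(i,k) * V$$(k,j)" by simp
    also have "\<dots> = V$$(i,j) * ?lam j"
    proof (cases "i < k")
      case True
      have "(\<Sum>l<k. B$$(i,l) * V$$(l,j)) = B$$(i,i) * V$$(i,j)"
        by (rule sum_single) (use True L(2) in auto)
      then show ?thesis using True j ne[OF True j] by (simp add: Vij L(2) field_simps)
    next
      case False
      then have ik: "i = k" using i by auto
      have "(\<Sum>l<k. B$$(i,l) * V$$(l,j)) = (\<Sum>l<k. B$$(k,l) * B$$(l,k) / (?lam j - ?nu l))"
        by (rule sum.cong) (use ik j in \<open>auto simp: Vij\<close>)
      then show ?thesis using lin3[OF sec[OF j]] ik j by (simp add: Vij)
    qed
    also have "\<dots> = (V * Lam mu (Suc k)) $$ (i,j)" by (rule Lam_right[OF Vc i j, symmetric])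
    finally show "(B * V) $$ (i,j) = (V * Lam mu (Suc k)) $$ (i,j)" .
  qed (use Vc L(1) in auto)
  show WB: "transpose_mat W * B = Lam mu (Suc k) * transpose_mat W"
  proof (rule eq_matI)
    fix i j assume "i < dim_row (Lam mu (Suc k) * transpose_mat W)" "j < dim_col (Lam mu (Suc k) * transpose_mat W)"
    then have i: "i < Suc k" and j: "j < Suc k" using Wc by auto
    have "(transpose_mat W * B) $$ (i,j) = (\<Sum>l<Suc k. transpose_mat W $$ (i,l) * B$$(l,j))"
      by (rule mult_entry[OF WTc L(1) i j])
    also have "\<dots> = (\<Sum>l<k. W$$(l,i) * B$$(l,j)) + W$$(k,i) * B$$(k,j)" using Wc i by simp
    also have "\<dots> = ?lam i * W$$(j,i)"
    proof (cases "j < k")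
      case True
      have "(\<Sum>l<k. W$$(l,i) * B$$(l,j)) = W$$(j,i) * B$$(j,j)"
        by (rule sum_single) (use True L(2) in auto)
      then show ?thesis using True i ne[OF True i] by (simp add: Wij L(2) field_simps)
    next
      case False
      then have jk: "j = k" using j by auto
      have "(\<Sum>l<k. W$$(l,i) * B$$(l,j)) = (\<Sum>l<k. B$$(k,l) * B$$(l,k) / (?lam i - ?nu l))"
        by (rule sum.cong) (use jk i in \<open>auto simp: Wij\<close>)
      then show ?thesis using lin3[OF sec[OF i]] jk i by (simp add: Wij)
    qed
    also have "\<dots> = (Lam mu (Suc k) * transpose_mat W) $$ (i,j)"
      using Lam_left[OF WTc i j] Wc i j by simp
    finally show "(transpose_mat W * B) $$ (i,j) = (Lam mu (Suc k) * transpose_mat W) $$ (i,j)" .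
  qed (use Wc L(1) in auto)
  define N where "N = transpose_mat W * V"
  have Nc: "N \<in> carrier_mat (Suc k) (Suc k)" unfolding N_def using WTc Vc by simp
  have "Lam mu (Suc k) * N = (Lam mu (Suc k) * transpose_mat W) * V" unfolding N_def
    by (rule assoc_mult_mat[symmetric, OF Lam_carrier WTc Vc])
  also have "\<dots> = (transpose_mat W * B) * V" using WB by simp
  also have "\<dots> = transpose_mat W * (B * V)" by (rule assoc_mult_mat[OF WTc L(1) Vc])
  also have "\<dots> = transpose_mat W * (V * Lam mu (Suc k))" using BV by simp
  also have "\<dots> = N * Lam mu (Suc k)" unfolding N_def by (rule assoc_mult_mat[symmetric, OF WTc Vc Lam_carrier])
  finally have Ncomm: "Lam mu (Suc k) * N = N * Lam mu (Suc k)" .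
  have Ndiag: "N = mat_diag (Suc k) pi"
  proof (rule eq_matI)
    fix i j assume "i < dim_row (mat_diag (Suc k) pi)" "j < dim_col (mat_diag (Suc k) pi)"
    then have i: "i < Suc k" and j: "j < Suc k" by (auto simp: mat_diag_def)
    show "N $$ (i,j) = mat_diag (Suc k) pi $$ (i,j)"
    proof (cases "i = j")
      case False
      then have "N $$ (i,j) = 0" using commute_Lam_offdiag[OF Nc Ncomm i j] mu_inj[OF k1 i j] by blast
      then show ?thesis using False i j by (simp add: mat_diag_def)
    next
      case True
      have "N $$ (j,j) = (\<Sum>l<Suc k. transpose_mat W $$ (j,l) * V$$(l,j))"
        unfolding N_def by (rule mult_entry[OF WTc Vc j j])
      also have "\<dots> = (\<Sum>l<k. W$$(l,j) * V$$(l,j)) + W$$(k,j) * V$$(k,j)" using Wc j by simp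
      also have "(\<Sum>l<k. W$$(l,j) * V$$(l,j)) = (\<Sum>l<k. B$$(k,l) * B$$(l,k) / (?lam j - ?nu l)^2)"
        by (rule sum.cong) (use j in \<open>auto simp: Wij Vij power2_eq_square\<close>)
      finally show ?thesis using True j by (simp add: Wij Vij mat_diag_def pi_def)
    qed
  qed (use Nc in \<open>auto simp: mat_diag_def\<close>)
  define Vi where "Vi = mat_diag (Suc k) (\<lambda>j. inverse (pi j)) * transpose_mat W"
  have Vic: "Vi \<in> carrier_mat (Suc k) (Suc k)" unfolding Vi_def by (rule mult_carrier_mat[OF mat_diag_dim WTc])
  have "Vi * V = mat_diag (Suc k) (\<lambda>j. inverse (pi j)) * N"
    unfolding Vi_def N_def by (rule assoc_mult_mat[OF mat_diag_dim WTc Vc])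
  also have "\<dots> = mat_diag (Suc k) (\<lambda>j. 1)" unfolding Ndiag mat_diag_diag
    by (rule eq_matI) (use pinz in \<open>auto simp: mat_diag_def\<close>)
  finally have ViV: "Vi * V = 1\<^sub>m (Suc k)" by simp
  have VVi: "V * Vi = 1\<^sub>m (Suc k)" by (rule inv_right(3)[OF Vic Vc ViV])
  define G2 where "G2 = blk k g * V"
  have bg: "blk k g \<in> carrier_mat (Suc k) (Suc k)" and bgi: "blk k (mat_inv g) \<in> carrier_mat (Suc k) (Suc k)"
    using g gi by auto
  have b1: "blk k g * blk k (mat_inv g) = 1\<^sub>m (Suc k)" using blk_mult[OF g gi(1)] gi blk_one by simp
  have b2: "blk k (mat_inv g) * blk k g = 1\<^sub>m (Suc k)" using blk_mult[OF gi(1) g] gi blk_one by simp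
  have G2c: "G2 \<in> carrier_mat (Suc k) (Suc k)" unfolding G2_def by (rule mult_carrier_mat[OF bg Vc])
  define G2i where "G2i = Vi * blk k (mat_inv g)"
  have G2ic: "G2i \<in> carrier_mat (Suc k) (Suc k)" unfolding G2i_def by (rule mult_carrier_mat[OF Vic bgi])
  have "G2 * G2i = blk k g * (V * (Vi * blk k (mat_inv g)))" unfolding G2_def G2i_def
    by (rule assoc_mult_mat[OF bg Vc mult_carrier_mat[OF Vic bgi]])
  also have "V * (Vi * blk k (mat_inv g)) = blk k (mat_inv g)" by (rule cancel_left[OF Vc Vic bgi VVi])
  finally have GG: "G2 * G2i = 1\<^sub>m (Suc k)" using b1 by simp
  note G2inv = inv_right[OF G2c G2ic GG]
  have lead: "lead x (Suc k) = blk k g * B * blk k (mat_inv g)" by (rule L(6))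
  have "lead x (Suc k) * G2 = blk k g * B * (blk k (mat_inv g) * (blk k g * V))" unfolding lead G2_def
    by (rule assoc_mult_mat[OF mult_carrier_mat[OF bg L(1)] bgi mult_carrier_mat[OF bg Vc]])
  also have "blk k (mat_inv g) * (blk k g * V) = V" by (rule cancel_left[OF bgi bg Vc b2])
  also have "blk k g * B * V = blk k g * (B * V)" by (rule assoc_mult_mat[OF bg L(1) Vc])
  also have "\<dots> = blk k g * (V * Lam mu (Suc k))" unfolding BV ..
  also have "\<dots> = G2 * Lam mu (Suc k)" unfolding G2_def by (rule assoc_mult_mat[symmetric, OF bg Vc Lam_carrier])
  finally have LG: "lead x (Suc k) * G2 = G2 * Lam mu (Suc k)" .
  have "lead x (Suc k) = lead x (Suc k) * (G2 * G2i)" unfolding GG by simp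
  also have "\<dots> = (lead x (Suc k) * G2) * G2i" by (rule assoc_mult_mat[symmetric, OF lead_carrier G2c G2ic])
  finally have LD: "lead x (Suc k) = G2 * Lam mu (Suc k) * mat_inv G2" unfolding LG G2inv(2) .
  have last: "G2 $$ (Suc k - 1, j) = 1" if j: "j < Suc k" for j
  proof -
    have "G2 $$ (k, j) = (\<Sum>l<Suc k. blk k g $$ (k,l) * V$$(l,j))" unfolding G2_def
      by (rule mult_entry[OF bg Vc]) (use j in auto)
    also have "\<dots> = (\<Sum>l<Suc k. (if l = k then 1 else 0) * V$$(l,j))"
      by (rule sum.cong) (use g in \<open>auto simp: blk_index\<close>)
    also have "\<dots> = V $$ (k,j)" by simp
    also have "\<dots> = 1" using j by (simp add: Vij)
    finally show ?thesis by simp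
  qed
  show "gprop x mu (Suc k) (blk k g * V)"
    unfolding gprop_def G2_def[symmetric] using G2c G2inv(1) LD last by auto
qed

end



context gen begin

lemma gprop_exists: "1 \<le> m \<Longrightarrow> m \<le> n \<Longrightarrow> \<exists>g. gprop x mu m g"
proof (induction m)
  case 0 then show ?case by simp
next
  case (Suc k)
  show ?case
  proof (cases "k = 0")
    case True
    have A: "lead x 1 \<in> carrier_mat (Suc 0) (Suc 0)" by simp
    have cp: "poly (Pk x 1) l = l - x $$ (0,0)" for l
      using char_poly_arrow[OF A, of l] unfolding Pk_def by simp
    have "poly (Pk x 1) 0 = - mu 1 0" using Pk_poly[of 1 0] Suc.prems True by simp
    then have x00: "x $$ (0,0) = mu 1 0" using cp[of 0] by simp
    have one: "1\<^sub>m 1 * 1\<^sub>m 1 = (1\<^sub>m 1 :: complex mat)" by simp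
    note I = inv_right[OF one_carrier_mat one_carrier_mat one]
    have "lead x 1 = 1\<^sub>m 1 * Lam mu 1 * mat_inv (1\<^sub>m 1)"
      unfolding I(2) by (rule eq_matI) (auto simp: Lam_def mat_diag_def x00)
    then have "gprop x mu 1 (1\<^sub>m 1)" unfolding gprop_def using I by auto
    then show ?thesis using True by auto
  next
    case False
    then have k: "1 \<le> k" "Suc k \<le> n" using Suc.prems by auto
    then obtain g where G: "gprop x mu k g" using Suc.IH by auto
    show ?thesis using step(1)[OF k G refl refl refl] by blast
  qed
qed

lemma dual_g_gprop: assumes "1 \<le> m" "m \<le> n" shows "gprop x mu m (dual_g x mu m)"
proof (rule dual_g_prop)
  obtain g where "gprop x mu m g" using gprop_exists[OF assms] by blast
  then show "\<exists>!g. gprop x mu m g" using gprop_unique[OF assms] by blast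
qed

lemma dual_block_eq: "dual_block x mu m = blk m (mat_inv (dual_g x mu m)) * lead x (Suc m) * blk m (dual_g x mu m)"
  unfolding dual_block_def blk_def Let_def ..

end



lemma frac_h: "(- a / d) / (q::complex) = - (a / (q * d))"
  by (simp add: divide_divide_eq_left mult.commute)

context gen begin

lemma pi_formula:
  assumes p: "1 \<le> p" "Suc p \<le> n" and G: "gprop x mu (Suc p) g"
    and hc: "h \<in> carrier_mat (Suc p) (Suc p)"
    and hA: "transpose_mat h * lead x (Suc p) = Lam mu (Suc p) * transpose_mat h"
    and hl: "\<And>j. j < Suc p \<Longrightarrow> h $$ (p,j) = 1" and j: "j < Suc p"
  shows "(transpose_mat h * g) $$ (j,j) = 1 - (\<Sum>i<p. (\<Prod>k<Suc p. mu p i - mu (Suc p) k) /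
      ((mu (Suc p) j - mu p i)^2 * (\<Prod>k\<in>{..<p}-{i}. mu p i - mu p k)))"
proof -
  have p': "1 \<le> p" "p \<le> n" using p by auto
  define g' where "g' = dual_g x mu p"
  have G': "gprop x mu p g'" unfolding g'_def by (rule dual_g_gprop[OF p'])
  define B where "B = blk p (mat_inv g') * lead x (Suc p) * blk p g'"
  define V where "V = mat (Suc p) (Suc p) (\<lambda>(i,j). if i < p then B$$(i,p) / (mu (Suc p) j - mu p i) else 1)"
  define W where "W = mat (Suc p) (Suc p) (\<lambda>(i,j). if i < p then B$$(p,i) / (mu (Suc p) j - mu p i) else 1)"
  note S = step[OF p G' B_def V_def W_def]
  note L = lvl[OF p G', folded B_def]
  have g'c: "g' \<in> carrier_mat p p" and inv: "invertible_mat g'" using G' unfolding gprop_def by auto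
  note gi = inv_props[OF g'c inv]
  have bg: "blk p g' \<in> carrier_mat (Suc p) (Suc p)" and bgi: "blk p (mat_inv g') \<in> carrier_mat (Suc p) (Suc p)"
    using g'c gi by auto
  have b1: "blk p g' * blk p (mat_inv g') = 1\<^sub>m (Suc p)" using blk_mult[OF g'c gi(1)] gi blk_one by simp
  have Vc: "V \<in> carrier_mat (Suc p) (Suc p)" unfolding V_def by simp
  have geq: "g = blk p g' * V" using gprop_unique[of "Suc p"] p G S(1) by auto
  have hTc: "transpose_mat h \<in> carrier_mat (Suc p) (Suc p)" using hc by simp
  define Y where "Y = transpose_mat h * blk p g'"
  have Yc: "Y \<in> carrier_mat (Suc p) (Suc p)" unfolding Y_def by (rule mult_carrier_mat[OF hTc bg])
  have X: "lead x (Suc p) \<in> carrier_mat (Suc p) (Suc p)" by simp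
  have "Y * B = transpose_mat h * (blk p g' * B)" unfolding Y_def by (rule assoc_mult_mat[OF hTc bg L(1)])
  also have "blk p g' * B = blk p g' * (blk p (mat_inv g') * lead x (Suc p)) * blk p g'"
    unfolding B_def by (rule assoc_mult_mat[symmetric, OF bg mult_carrier_mat[OF bgi X] bg])
  also have "blk p g' * (blk p (mat_inv g') * lead x (Suc p)) = lead x (Suc p)"
    by (rule cancel_left[OF bg bgi X b1])
  also have "transpose_mat h * (lead x (Suc p) * blk p g') = (transpose_mat h * lead x (Suc p)) * blk p g'"
    by (rule assoc_mult_mat[symmetric, OF hTc X bg])
  also have "\<dots> = Lam mu (Suc p) * Y" unfolding hA Y_def by (rule assoc_mult_mat[OF Lam_carrier hTc bg])
  finally have YB: "Y * B = Lam mu (Suc p) * Y" .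
  have Ylast: "Y $$ (j', p) = 1" if j': "j' < Suc p" for j'
  proof -
    have "Y $$ (j',p) = (\<Sum>l<Suc p. transpose_mat h $$ (j',l) * blk p g' $$ (l,p))" unfolding Y_def
      by (rule mult_entry[OF hTc bg j']) simp
    also have "\<dots> = (\<Sum>l<Suc p. (if l = p then h $$ (p, j') else 0))"
      by (rule sum.cong) (use hc j' g'c in \<open>auto simp: blk_index\<close>)
    also have "\<dots> = 1" using hl[OF j'] by simp
    finally show ?thesis .
  qed
  have ne: "mu (Suc p) j' - mu p i \<noteq> 0" if "i < p" "j' < Suc p" for i j'
    using mu_disj[OF p that] by simp
  have Yent: "Y $$ (j,i) = B$$(p,i) / (mu (Suc p) j - mu p i)" if i: "i < p" for i
  proof -
    have "(Y * B) $$ (j,i) = (\<Sum>l<Suc p. Y $$ (j,l) * B $$ (l,i))" by (rule mult_entry[OF Yc L(1) j]) (use i in simp)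
    also have "\<dots> = (\<Sum>l<p. Y $$ (j,l) * B $$ (l,i)) + Y $$ (j,p) * B $$ (p,i)" by simp
    also have "(\<Sum>l<p. Y $$ (j,l) * B $$ (l,i)) = Y $$ (j,i) * B $$ (i,i)"
      by (rule sum_single) (use i L(2) in auto)
    finally have e1: "(Y * B) $$ (j,i) = Y $$ (j,i) * mu p i + B $$ (p,i)" using Ylast[OF j] i by (simp add: L(2))
    have e2: "(Lam mu (Suc p) * Y) $$ (j,i) = mu (Suc p) j * Y $$ (j,i)" by (rule Lam_left[OF Yc j]) (use i in simp)
    from e1 e2 YB have "Y $$ (j,i) * (mu (Suc p) j - mu p i) = B $$ (p,i)" by (simp add: algebra_simps)
    then show ?thesis using ne[OF i j] by (simp add: field_simps)
  qed
  have "transpose_mat h * g = Y * V" unfolding geq Y_def by (rule assoc_mult_mat[symmetric, OF hTc bg Vc])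
  then have "(transpose_mat h * g) $$ (j,j) = (\<Sum>l<Suc p. Y $$ (j,l) * V $$ (l,j))"
    using mult_entry[OF Yc Vc j j] by simp
  also have "\<dots> = (\<Sum>l<p. Y $$ (j,l) * V $$ (l,j)) + Y $$ (j,p) * V $$ (p,j)" by simp
  also have "Y $$ (j,p) * V $$ (p,j) = 1" using Ylast[OF j] j by (simp add: V_def)
  also have "(\<Sum>l<p. Y $$ (j,l) * V $$ (l,j)) = (\<Sum>i<p. - ((\<Prod>k<Suc p. mu p i - mu (Suc p) k) /
      ((mu (Suc p) j - mu p i)^2 * (\<Prod>k\<in>{..<p}-{i}. mu p i - mu p k))))"
  proof (rule sum.cong[OF refl])
    fix i assume "i \<in> {..<p}"
    then have i: "i < p" by simp
    have ae: "B$$(p,i) * B$$(i,p) * (\<Prod>k\<in>{..<p}-{i}. mu p i - mu p k) = - poly (Pk x (Suc p)) (mu p i)"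
      using arrow_eig[OF p G' i] unfolding B_def .
    have D: "(\<Prod>k\<in>{..<p}-{i}. mu p i - mu p k) \<noteq> 0" using mu_inj[OF p'] i by auto
    have P: "poly (Pk x (Suc p)) (mu p i) = (\<Prod>k<Suc p. mu p i - mu (Suc p) k)"
      by (rule Pk_poly) (use p in auto)
    have "Y $$ (j,i) * V $$ (i,j) = B$$(p,i) * B$$(i,p) / (mu (Suc p) j - mu p i)^2"
      using i j by (simp add: Yent[OF i] V_def power2_eq_square)
    also have "B$$(p,i) * B$$(i,p) = - poly (Pk x (Suc p)) (mu p i) / (\<Prod>k\<in>{..<p}-{i}. mu p i - mu p k)"
      using ae D by (simp add: field_simps)
    finally show "Y $$ (j,i) * V $$ (i,j) = - ((\<Prod>k<Suc p. mu p i - mu (Suc p) k) /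
      ((mu (Suc p) j - mu p i)^2 * (\<Prod>k\<in>{..<p}-{i}. mu p i - mu p k)))"
      by (simp only: P frac_h)
  qed
  finally show ?thesis by (simp add: sum_negf)
qed

end



context gen begin

lemma main:
  assumes m: "1 \<le> m" "m \<le> n - 1" and n2: "2 \<le> n"
  shows "mat_diag m (dual_b (transpose_mat x) mu m)
           = Pi_mat mu m * mat_inv (mat_diag m (dual_b x mu m)) * Sigma_mat x mu m"
proof -
  have mn: "Suc m \<le> n" "m \<le> n" "1 \<le> m" using m n2 by auto
  define xt where "xt = transpose_mat x"
  have GT: "gen n xt mu" unfolding xt_def
    by (rule gen.intro[OF generic_transpose[OF gen] eig_ordering_transpose[OF gen ord]])
  define g where "g = dual_g x mu m"
  define h where "h = dual_g xt mu m"
  have G: "gprop x mu m g" unfolding g_def by (rule dual_g_gprop[OF mn(3,2)])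
  have H: "gprop xt mu m h" unfolding h_def by (rule gen.dual_g_gprop[OF GT mn(3,2)])
  define B where "B = blk m (mat_inv g) * lead x (Suc m) * blk m g"
  define Bt where "Bt = blk m (mat_inv h) * lead xt (Suc m) * blk m h"
  have dbB: "dual_b x mu m j = B $$ (m,j)" for j unfolding dual_b_def dual_block_eq B_def g_def ..
  have dbBt: "dual_b xt mu m j = Bt $$ (m,j)" for j unfolding dual_b_def gen.dual_block_eq[OF GT] Bt_def h_def ..
  note L = lvl[OF mn(3,1) G, folded B_def]
  note LT = gen.lvl[OF GT mn(3,1) H, folded Bt_def]
  have gc: "g \<in> carrier_mat m m" and ginv: "invertible_mat g" using G unfolding gprop_def by auto
  note gi = inv_props[OF gc ginv]
  have hc: "h \<in> carrier_mat m m" and hl: "\<And>j. j < m \<Longrightarrow> h $$ (m-1,j) = 1" using H unfolding gprop_def by auto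
  have hTc: "transpose_mat h \<in> carrier_mat m m" using hc by simp
  have leadT: "lead xt m = transpose_mat (lead x m)" unfolding xt_def by (rule lead_transpose[OF xc mn(2)])
  have hA: "transpose_mat h * lead x m = Lam mu m * transpose_mat h"
  proof -
    have "lead xt m * h = h * Lam mu m" by (rule gprop_eig(1)[OF H])
    then have "transpose_mat (lead xt m * h) = transpose_mat (h * Lam mu m)" by simp
    then have "transpose_mat h * transpose_mat (lead xt m) = Lam mu m * transpose_mat h"
      by (simp only: transpose_mult[OF lead_carrier hc] transpose_mult[OF hc Lam_carrier] Lam_transpose)
    then show ?thesis unfolding leadT by simp
  qed
  define M where "M = transpose_mat h * g"
  have Mc: "M \<in> carrier_mat m m" unfolding M_def by (rule mult_carrier_mat[OF hTc gc])
  have "Lam mu m * M = (Lam mu m * transpose_mat h) * g" unfolding M_def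
    by (rule assoc_mult_mat[symmetric, OF Lam_carrier hTc gc])
  also have "\<dots> = transpose_mat h * (lead x m * g)" unfolding hA[symmetric]
    by (rule assoc_mult_mat[OF hTc lead_carrier gc])
  also have "\<dots> = M * Lam mu m" unfolding gprop_eig(1)[OF G] M_def
    by (rule assoc_mult_mat[symmetric, OF hTc gc Lam_carrier])
  finally have Mcomm: "Lam mu m * M = M * Lam mu m" .
  define pi where "pi j = M $$ (j,j)" for j
  have Mdiag: "M = mat_diag m pi"
  proof (rule eq_matI)
    fix i j assume "i < dim_row (mat_diag m pi)" "j < dim_col (mat_diag m pi)"
    then have i: "i < m" and j: "j < m" by (auto simp: mat_diag_def)
    show "M $$ (i,j) = mat_diag m pi $$ (i,j)"
    proof (cases "i = j")
      case False
      then have "M $$ (i,j) = 0" using commute_Lam_offdiag[OF Mc Mcomm i j] mu_inj[OF mn(3,2) i j] by blast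
      then show ?thesis using False i j by (simp add: mat_diag_def)
    qed (use i in \<open>simp add: mat_diag_def pi_def\<close>)
  qed (use Mc in \<open>auto simp: mat_diag_def\<close>)
  have hT: "transpose_mat h = M * mat_inv g"
  proof -
    have "M * mat_inv g = transpose_mat h * (g * mat_inv g)" unfolding M_def
      by (rule assoc_mult_mat[OF hTc gc gi(1)])
    then show ?thesis using gi hTc by simp
  qed
  have hent: "h $$ (l,j) = pi j * mat_inv g $$ (j,l)" if "l < m" "j < m" for l j
  proof -
    have "h $$ (l,j) = transpose_mat h $$ (j,l)" using hc that by simp
    also have "\<dots> = (mat_diag m pi * mat_inv g) $$ (j,l)" unfolding hT Mdiag ..
    also have "\<dots> = pi j * mat_inv g $$ (j,l)" using mat_diag_mult_left[OF gi(1)] that by simp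
    finally show ?thesis .
  qed
  have Btm: "Bt $$ (m,j) = pi j * B $$ (j,m)" if j: "j < m" for j
  proof -
    have "Bt $$ (m,j) = (\<Sum>l<m. xt $$ (m,l) * h $$ (l,j))" by (rule LT(3)[OF j])
    also have "\<dots> = (\<Sum>l<m. pi j * (mat_inv g $$ (j,l) * x $$ (l,m)))"
      by (rule sum.cong) (use j mn xc in \<open>auto simp: xt_def hent\<close>)
    also have "\<dots> = pi j * B $$ (j,m)" by (simp add: L(4)[OF j] sum_distrib_left)
    finally show ?thesis .
  qed
  have arr: "B$$(m,j) * B$$(j,m) * (\<Prod>l\<in>{..<m}-{j}. mu m j - mu m l) = - poly (Pk x (Suc m)) (mu m j)"
    if j: "j < m" for j using arrow_eig[OF mn(3,1) G j] unfolding B_def .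
  have bnz: "B $$ (m,j) \<noteq> 0" if j: "j < m" for j
    using arr[OF j] P_next_nonzero[OF mn(3,1) j] by auto
  have Sig: "Sigma_mat x mu m = mat_diag m (\<lambda>j. B$$(m,j) * B$$(j,m))"
  proof -
    have inv: "mat_inv (poly_Lam (pderiv (Pk x m)) mu m) = mat_diag m (\<lambda>j. inverse (poly (pderiv (Pk x m)) (mu m j)))"
      unfolding poly_Lam_def by (rule mat_inv_diag) (use Pk_deriv_nz[OF mn(3,2)] in auto)
    have e: "- (poly (Pk x (Suc m)) (mu m j) * inverse (poly (pderiv (Pk x m)) (mu m j))) = B$$(m,j) * B$$(j,m)"
      if j: "j < m" for j
    proof -
      have D: "(\<Prod>l\<in>{..<m}-{j}. mu m j - mu m l) \<noteq> 0" using mu_inj[OF mn(3,2)] j by auto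
      have P: "poly (Pk x (Suc m)) (mu m j) = - (B$$(m,j) * B$$(j,m) * (\<Prod>l\<in>{..<m}-{j}. mu m j - mu m l))"
        using arr[OF j] by (metis minus_minus)
      show ?thesis unfolding P Pk_deriv[OF mn(3,2) j] using D by (simp add: field_simps)
    qed
    show ?thesis unfolding Sigma_mat_def inv unfolding poly_Lam_def mat_diag_diag
      by (rule eq_matI) (auto simp: mat_diag_def e)
  qed
  have Pi: "Pi_mat mu m = mat_diag m pi"
  proof -
    have "pi j = 1 - (\<Sum>i<m-1. (\<Prod>k<m. mu (m-1) i - mu m k) /
      ((mu m j - mu (m-1) i)^2 * (\<Prod>k\<in>{..<m-1} - {i}. mu (m-1) i - mu (m-1) k)))" if j: "j < m" for j
    proof (cases "m = 1")
      case True
      then have j0: "j = 0" using j by simp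
      have "pi j = (\<Sum>l<1. transpose_mat h $$ (0,l) * g $$ (l,0))"
        unfolding pi_def M_def j0 using mult_entry[OF hTc gc, of 0 0] True by simp
      also have "\<dots> = h $$ (0,0) * g $$ (0,0)" using hc True by simp
      also have "\<dots> = 1" using hl[of 0] G True unfolding gprop_def by simp
      finally show ?thesis using True by simp
    next
      case False
      then obtain p where mp: "m = Suc p" and p: "1 \<le> p" "Suc p \<le> n" using mn by (cases m) auto
      have hA': "transpose_mat h * lead x (Suc p) = Lam mu (Suc p) * transpose_mat h" using hA mp by simp
      have "pi j = (transpose_mat h * g) $$ (j,j)" unfolding pi_def M_def ..
      also have "\<dots> = 1 - (\<Sum>i<p. (\<Prod>k<Suc p. mu p i - mu (Suc p) k) /
          ((mu (Suc p) j - mu p i)^2 * (\<Prod>k\<in>{..<p}-{i}. mu p i - mu p k)))"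
        by (rule pi_formula[OF p]) (use G hc hl j mp hA' in auto)
      finally show ?thesis using mp by simp
    qed
    then show ?thesis unfolding Pi_mat_def by (intro eq_matI) (auto simp: mat_diag_def)
  qed
  have binv: "mat_inv (mat_diag m (dual_b x mu m)) = mat_diag m (\<lambda>j. inverse (dual_b x mu m j))"
    by (rule mat_inv_diag) (use bnz in \<open>auto simp: dbB\<close>)
  show ?thesis unfolding Pi binv Sig mat_diag_diag xt_def[symmetric]
    by (rule eq_matI) (use bnz in \<open>auto simp: mat_diag_def dbB dbBt Btm\<close>)
qed

end

theorem mainTheorem3:
  fixes n m :: nat and x :: "complex mat" and mu :: "nat \<Rightarrow> nat \<Rightarrow> complex"
  assumes "2 \<le> n"
    and "generic n x"
    and "eig_ordering n x mu"
    and "1 \<le> m" and "m \<le> n - 1"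
  shows "mat_diag m (dual_b (transpose_mat x) mu m)
           = Pi_mat mu m * mat_inv (mat_diag m (dual_b x mu m)) * Sigma_mat x mu m"
  using gen.main[OF gen.intro[OF assms(2,3)] assms(4,5,1)] .


end
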